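(* Suppose the Markov chain $\Xi$ on $\mathbb X\subseteq\mathbb R_+$ satisfies $(\mathrm T_{\alpha,\beta,c})$ and that $\liminf_{x\to\infty}(x^\gamma\mu(x))>-\infty$ for some $\gamma$ with $0\le\gamma<\alpha-1$. Then for every $q\ge\frac{\alpha}{1+\gamma}$, all $a$ sufficiently large, and all $x>a$, $\mathbb E_x[\tau_a^q]=\infty$.
   Context: $\theta:=\xi_1-\xi_0$; $\mathbb P_x,\mathbb E_x$ refer to the chain started at $x$; $y_+:=y\mathbf 1\{y\ge0\}$, $y_-:=-y\mathbf 1\{y<0\}$; $\mu(x):=\mathbb E_x[\theta]$; $\tau_a:=\min\{n\ge0:\xi_n\le a\}$. $(\mathrm T_{\alpha,\beta,c})$: there exist $\alpha\in(1,2)$, $\beta>\alpha$, $c>0$, $x_0\in\mathbb R_+$ with $\lim_{y\to\infty}\sup_{x\ge x_0}|y^\alpha\mathbb P_x[\theta_+>y]-c|=0$ and $\sup_{x\ge x_0}\mathbb E_x[\theta_-^\beta]<\infty$. *)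

theory Defs
  imports "HOL-Probability.Probability"
begin

text \<open>Paths are streams of reals; P x is the law of the path
  (xi_0, xi_1, ...) when the chain is started at x, with coordinates xi_n = w !! n.
  The Markov property is expressed by the one-step recursion
  P x = (draw y from K x; then continue as the chain started at y, prefixed by x).\<close>
definition markov_chain_on ::
  "real set \<Rightarrow> (real \<Rightarrow> real measure) \<Rightarrow> (real \<Rightarrow> real stream measure) \<Rightarrow> bool" where
  "markov_chain_on X K P \<longleftrightarrow>
     X \<subseteq> {0..} \<and> X \<in> sets borel \<and>
     K \<in> borel \<rightarrow>\<^sub>M prob_algebra borel \<and>
     P \<in> borel \<rightarrow>\<^sub>M prob_algebra (stream_space borel) \<and>
     (\<forall>x\<in>X. emeasure (K x) X = 1) \<and>
     (\<forall>x\<in>X. P x = K x \<bind> (\<lambda>y. distr (P y) (stream_space borel) (\<lambda>w. x ## w)))"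

definition theta :: "real stream \<Rightarrow> real" where
  "theta w = w !! 1 - w !! 0"

definition pos_part :: "real \<Rightarrow> real" where "pos_part y = (if y \<ge> 0 then y else 0)"
definition neg_part :: "real \<Rightarrow> real" where "neg_part y = (if y < 0 then - y else 0)"

definition mu :: "(real \<Rightarrow> real stream measure) \<Rightarrow> real \<Rightarrow> real" where
  "mu P x = (\<integral>w. theta w \<partial>P x)"

definition hit_time :: "real \<Rightarrow> real stream \<Rightarrow> enat" where
  "hit_time a w = (if \<exists>n. w !! n \<le> a then enat (LEAST n. w !! n \<le> a) else \<infinity>)"

definition hit_time_pow :: "real \<Rightarrow> real \<Rightarrow> real stream \<Rightarrow> ennreal" where
  "hit_time_pow q a w = (case hit_time a w of enat n \<Rightarrow> ennreal (real n powr q) | \<infinity> \<Rightarrow> \<infinity>)"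

definition cond_T ::
  "real set \<Rightarrow> (real \<Rightarrow> real stream measure) \<Rightarrow> real \<Rightarrow> real \<Rightarrow> real \<Rightarrow> bool" where
  "cond_T X P \<alpha> \<beta> c \<longleftrightarrow>
     1 < \<alpha> \<and> \<alpha> < 2 \<and> \<beta> > \<alpha> \<and> c > 0 \<and>
     (\<exists>x0\<ge>0.
        (\<forall>\<epsilon>>0. \<exists>Y. \<forall>y\<ge>Y. \<forall>x\<in>X. x \<ge> x0 \<longrightarrow>
            \<bar>y powr \<alpha> * measure (P x) {w \<in> space (P x). pos_part (theta w) > y} - c\<bar> \<le> \<epsilon>) \<and>
        (\<exists>B::real. \<forall>x\<in>X. x \<ge> x0 \<longrightarrow>
            (\<integral>\<^sup>+w. ennreal (neg_part (theta w) powr \<beta>) \<partial>P x) \<le> ennreal B))"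

end

theory Submission
  imports Defs
begin



abbreviation "S \<equiv> stream_space (borel :: real measure)"

lemma mc_D:
  assumes "markov_chain_on X K P"
  shows "X \<subseteq> {0..}" "X \<in> sets borel" "K \<in> borel \<rightarrow>\<^sub>M prob_algebra borel"
    "P \<in> borel \<rightarrow>\<^sub>M prob_algebra S" "\<And>x. x\<in>X \<Longrightarrow> emeasure (K x) X = 1"
    "\<And>x. x\<in>X \<Longrightarrow> P x = K x \<bind> (\<lambda>y. distr (P y) S (\<lambda>w. x ## w))"
  using assms unfolding markov_chain_on_def by blast+

lemma mc_P_meas: "markov_chain_on X K P \<Longrightarrow> P \<in> borel \<rightarrow>\<^sub>M subprob_algebra S"
  by (rule measurable_prob_algebraD[OF mc_D(4)])

lemma mc_P_space: "markov_chain_on X K P \<Longrightarrow> P y \<in> space (prob_algebra S)"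
  by (rule measurable_space[OF mc_D(4)]) simp_all

lemma mc_P_prob: "markov_chain_on X K P \<Longrightarrow> prob_space (P y)"
  using mc_P_space[of X K P y] unfolding space_prob_algebra by blast

lemma mc_P_sets: "markov_chain_on X K P \<Longrightarrow> sets (P y) = sets S"
  using mc_P_space[of X K P y] unfolding space_prob_algebra by blast

lemma mc_P_space_eq: "markov_chain_on X K P \<Longrightarrow> space (P y) = space S"
  by (rule sets_eq_imp_space_eq[OF mc_P_sets])

lemma mc_K_space: "markov_chain_on X K P \<Longrightarrow> K y \<in> space (prob_algebra borel)"
  by (rule measurable_space[OF mc_D(3)]) simp_all

lemma mc_K_prob: "markov_chain_on X K P \<Longrightarrow> prob_space (K y)"
  using mc_K_space[of X K P y] unfolding space_prob_algebra by blast

lemma mc_K_sets: "markov_chain_on X K P \<Longrightarrow> sets (K y) = sets borel"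
  using mc_K_space[of X K P y] unfolding space_prob_algebra by blast

lemma mc_K_space_eq: "markov_chain_on X K P \<Longrightarrow> space (K y) = UNIV"
  using sets_eq_imp_space_eq[OF mc_K_sets] by simp

lemma mc_rec:
  assumes mc: "markov_chain_on X K P" and x: "x \<in> X" and A: "A \<in> sets S"
  shows "emeasure (P x) A = (\<integral>\<^sup>+y. emeasure (P y) {w\<in>space S. x ## w \<in> A} \<partial>K x)"
proof -
  have eq: "P x = K x \<bind> (\<lambda>y. distr (P y) S (\<lambda>w. x ## w))"
    using mc_D(6)[OF mc x] .
  have Pm: "P \<in> borel \<rightarrow>\<^sub>M subprob_algebra S" using mc_P_meas[OF mc] .
  have F: "(\<lambda>y. distr (P y) S (\<lambda>w. x ## w)) \<in> K x \<rightarrow>\<^sub>M subprob_algebra S"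
  proof -
    have "(\<lambda>M. distr M S (\<lambda>w. x ## w)) \<in> subprob_algebra S \<rightarrow>\<^sub>M subprob_algebra S"
      by (rule measurable_distr) measurable
    then have "(\<lambda>y. distr (P y) S (\<lambda>w. x ## w)) \<in> borel \<rightarrow>\<^sub>M subprob_algebra S"
      using Pm by (rule measurable_compose[rotated])
    then show ?thesis by (subst measurable_cong_sets[OF mc_K_sets[OF mc] refl])
  qed
  have ne: "space (K x) \<noteq> {}" using mc_K_space_eq[OF mc] by simp
  have "emeasure (P x) A = (\<integral>\<^sup>+y. emeasure (distr (P y) S (\<lambda>w. x ## w)) A \<partial>K x)"
    unfolding eq by (rule emeasure_bind[OF ne F A])
  also have "\<dots> = (\<integral>\<^sup>+y. emeasure (P y) {w\<in>space S. x ## w \<in> A} \<partial>K x)"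
  proof (rule nn_integral_cong)
    fix y
    have m: "(\<lambda>w. x ## w) \<in> P y \<rightarrow>\<^sub>M S"
      by (subst measurable_cong_sets[OF mc_P_sets[OF mc] refl]) measurable
    show "emeasure (distr (P y) S (\<lambda>w. x ## w)) A = emeasure (P y) {w\<in>space S. x ## w \<in> A}"
    proof -
      have "(\<lambda>w. x ## w) -` A \<inter> space (P y) = {w\<in>space S. x ## w \<in> A}"
        using mc_P_space_eq[OF mc, of y] by auto
      then show ?thesis using emeasure_distr[OF m A] by simp
    qed
  qed
  finally show ?thesis .
qed

lemma space_S: "space S = UNIV" by (simp add: space_stream_space)

lemma mc_AE0:
  assumes mc: "markov_chain_on X K P" and y: "y \<in> X"
  shows "AE w in P y. w !! 0 = y"
proof -
  have A: "{w\<in>space S. w !! 0 \<noteq> y} \<in> sets S" by measurable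
  have "emeasure (P y) {w\<in>space S. w !! 0 \<noteq> y} = (\<integral>\<^sup>+y'. emeasure (P y') {w\<in>space S. y ## w \<in> {w\<in>space S. w !! 0 \<noteq> y}} \<partial>K y)"
    by (rule mc_rec[OF mc y A])
  also have "\<dots> = 0" by (simp add: space_S)
  finally have "emeasure (P y) {w\<in>space S. w !! 0 \<noteq> y} = 0" .
  moreover have "{w \<in> space (P y). \<not> w !! 0 = y} = {w\<in>space S. w !! 0 \<noteq> y}"
    using mc_P_space_eq[OF mc] by simp
  ultimately show ?thesis
    using AE_iff_measurable[of "{w\<in>space S. w !! 0 \<noteq> y}" "P y" "\<lambda>w. w !! 0 = y"] A mc_P_sets[OF mc]
    by simp
qed

lemma mc_AEX:
  assumes mc: "markov_chain_on X K P" and x: "x \<in> X"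
  shows "AE y in K x. y \<in> X"
proof -
  interpret prob_space "K x" by (rule mc_K_prob[OF mc])
  have "prob X = 1" using mc_D(5)[OF mc x] by (simp add: emeasure_eq_measure)
  then show ?thesis by (rule AE_prob_1)
qed

lemma mc_first:
  assumes mc: "markov_chain_on X K P" and y: "y \<in> X" and A: "A \<in> sets borel"
  shows "emeasure (P y) {w\<in>space S. w !! 0 \<in> A} = indicator A y"
proof -
  interpret prob_space "P y" by (rule mc_P_prob[OF mc])
  have "emeasure (P y) {w\<in>space S. w !! 0 \<in> A} = emeasure (P y) (if y \<in> A then space S else {})"
  proof (rule emeasure_eq_AE)
    show "AE w in P y. (w \<in> {w\<in>space S. w !! 0 \<in> A}) = (w \<in> (if y \<in> A then space S else {}))"
      using mc_AE0[OF mc y] by eventually_elim (auto simp: space_S)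
    show "{w\<in>space S. w !! 0 \<in> A} \<in> sets (P y)" unfolding mc_P_sets[OF mc] using A by measurable
    show "(if y \<in> A then space S else {}) \<in> sets (P y)" unfolding mc_P_sets[OF mc] by simp
  qed
  also have "\<dots> = indicator A y"
    using emeasure_space_1 mc_P_space_eq[OF mc, of y] by (simp add: indicator_def)
  finally show ?thesis .
qed

lemma mc_distr1:
  assumes mc: "markov_chain_on X K P" and x: "x \<in> X"
  shows "distr (P x) borel (\<lambda>w. w !! 1) = K x"
proof (rule measure_eqI)
  show "sets (distr (P x) borel (\<lambda>w. w !! 1)) = sets (K x)" using mc_K_sets[OF mc] by simp
  fix A assume "A \<in> sets (distr (P x) borel (\<lambda>w. w !! 1))"
  then have A: "A \<in> sets borel" by simp
  have m: "(\<lambda>w. w !! 1) \<in> P x \<rightarrow>\<^sub>M borel"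
    by (subst measurable_cong_sets[OF mc_P_sets[OF mc] refl]) measurable
  have A1: "{w\<in>space S. w !! 1 \<in> A} \<in> sets S" using A by measurable
  have "emeasure (distr (P x) borel (\<lambda>w. w !! 1)) A = emeasure (P x) {w\<in>space S. w !! 1 \<in> A}"
    using emeasure_distr[OF m A] mc_P_space_eq[OF mc, of x] by (simp add: vimage_def Int_def conj_commute)
  also have "\<dots> = (\<integral>\<^sup>+y. emeasure (P y) {w\<in>space S. x ## w \<in> {w\<in>space S. w !! 1 \<in> A}} \<partial>K x)"
    by (rule mc_rec[OF mc x A1])
  also have "\<dots> = (\<integral>\<^sup>+y. emeasure (P y) {w\<in>space S. w !! 0 \<in> A} \<partial>K x)"
    by (simp add: space_S)
  also have "\<dots> = (\<integral>\<^sup>+y. indicator A y \<partial>K x)"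
    by (intro nn_integral_cong_AE, use mc_AEX[OF mc x] in eventually_elim) (rule mc_first[OF mc _ A])
  also have "\<dots> = emeasure (K x) A" using A mc_K_sets[OF mc] by simp
  finally show "emeasure (distr (P x) borel (\<lambda>w. w !! 1)) A = emeasure (K x) A" .
qed

definition Ev :: "real \<Rightarrow> nat \<Rightarrow> real stream set" where
  "Ev a n = {w\<in>space S. \<forall>k\<le>n. a < w !! k}"

lemma Ev_sets[measurable]: "Ev a n \<in> sets S"
proof -
  have "Ev a n = (\<Inter>k\<in>{..n}. {w\<in>space S. a < w !! k}) \<inter> space S"
    unfolding Ev_def by auto
  also have "\<dots> \<in> sets S" by measurable
  finally show ?thesis .
qed

lemma all_le_Suc_stream: "(\<forall>k\<le>Suc n. a < (x ## w) !! k) \<longleftrightarrow> a < x \<and> (\<forall>k\<le>n. a < w !! k)"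
proof
  assume H: "\<forall>k\<le>Suc n. a < (x ## w) !! k"
  have "a < (x ## w) !! 0" using H by blast
  moreover have "\<forall>k\<le>n. a < w !! k"
  proof (intro allI impI)
    fix k assume "k \<le> n" then have "Suc k \<le> Suc n" by simp
    then have "a < (x ## w) !! Suc k" using H by blast
    then show "a < w !! k" by simp
  qed
  ultimately show "a < x \<and> (\<forall>k\<le>n. a < w !! k)" by simp
next
  assume H: "a < x \<and> (\<forall>k\<le>n. a < w !! k)"
  show "\<forall>k\<le>Suc n. a < (x ## w) !! k"
  proof (intro allI impI)
    fix k assume k: "k \<le> Suc n"
    show "a < (x ## w) !! k"
    proof (cases k)
      case 0 then show ?thesis using H by simp
    next
      case (Suc j) then show ?thesis using H k by simp
    qed
  qed
qed

lemma mc_Ev_rec: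
  assumes mc: "markov_chain_on X K P" and x: "x \<in> X"
  shows "emeasure (P x) (Ev a (Suc n)) = (if a < x then \<integral>\<^sup>+y. emeasure (P y) (Ev a n) \<partial>K x else 0)"
proof -
  have "emeasure (P x) (Ev a (Suc n)) = (\<integral>\<^sup>+y. emeasure (P y) {w\<in>space S. x ## w \<in> Ev a (Suc n)} \<partial>K x)"
    by (rule mc_rec[OF mc x Ev_sets])
  also have "{w\<in>space S. x ## w \<in> Ev a (Suc n)} = (if a < x then Ev a n else {})"
    unfolding Ev_def by (auto simp: space_S all_le_Suc_stream)
  finally show ?thesis by simp
qed

lemma mc_m_meas: "markov_chain_on X K P \<Longrightarrow> A \<in> sets S \<Longrightarrow> (\<lambda>y. measure (P y) A) \<in> borel_measurable (K x)"
  apply (subst measurable_cong_sets[OF mc_K_sets refl], assumption)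
  apply (rule measurable_compose[OF mc_P_meas measurable_measure_subprob_algebra], assumption+)
  done

lemma mc_emP: "markov_chain_on X K P \<Longrightarrow> emeasure (P y) A = ennreal (measure (P y) A)"
proof -
  assume mc: "markov_chain_on X K P"
  interpret prob_space "P y" by (rule mc_P_prob[OF mc])
  show ?thesis by (rule emeasure_eq_measure)
qed

lemma mc_m_rec:
  assumes mc: "markov_chain_on X K P" and x: "x \<in> X" and ax: "a < x"
  shows "measure (P x) (Ev a (Suc n)) = (\<integral>y. measure (P y) (Ev a n) \<partial>K x)"
proof -
  interpret K: prob_space "K x" by (rule mc_K_prob[OF mc])
  have int: "integrable (K x) (\<lambda>y. measure (P y) (Ev a n))"
    by (rule K.integrable_const_bound[where B=1]) (auto intro: mc_m_meas[OF mc Ev_sets] prob_space.prob_le_1[OF mc_P_prob[OF mc]])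
  have "emeasure (P x) (Ev a (Suc n)) = (\<integral>\<^sup>+y. ennreal (measure (P y) (Ev a n)) \<partial>K x)"
    using mc_Ev_rec[OF mc x, of a n] ax by (simp add: mc_emP[OF mc])
  also have "\<dots> = ennreal (\<integral>y. measure (P y) (Ev a n) \<partial>K x)"
    by (rule nn_integral_eq_integral[OF int]) simp
  finally show ?thesis
    by (simp add: mc_emP[OF mc])
qed

lemma mc_m0:
  assumes mc: "markov_chain_on X K P" and y: "y \<in> X"
  shows "measure (P y) (Ev a 0) = (if a < y then 1 else 0)"
proof -
  have "Ev a 0 = {w\<in>space S. w !! 0 \<in> {a<..}}" unfolding Ev_def by auto
  then have "emeasure (P y) (Ev a 0) = indicator {a<..} y" using mc_first[OF mc y, of "{a<..}"] by simp
  then show ?thesis by (simp add: measure_def indicator_def)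
qed

lemma survival_induct:
  assumes mc: "markov_chain_on X K P"
    and Gm: "G \<in> borel_measurable borel" and G1: "\<And>y. G y \<le> 1" and Gl: "\<And>y. -1 \<le> G y"
    and Ga: "\<And>y. y \<in> X \<Longrightarrow> y \<le> a \<Longrightarrow> G y \<le> 0" and eta: "0 \<le> \<eta>"
    and step: "\<And>x. x \<in> X \<Longrightarrow> a < x \<Longrightarrow> G x - \<eta> \<le> (\<integral>y. G y \<partial>K x)"
  shows "\<forall>y\<in>X. G y - real n * \<eta> \<le> measure (P y) (Ev a n)"
proof (induction n)
  case 0
  show ?case
  proof
    fix y assume y: "y \<in> X"
    show "G y - real 0 * \<eta> \<le> measure (P y) (Ev a 0)"
      using mc_m0[OF mc y, of a] G1[of y] Ga[OF y] by auto
  qed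
next
  case (Suc n)
  show ?case
  proof
    fix x assume x: "x \<in> X"
    show "G x - real (Suc n) * \<eta> \<le> measure (P x) (Ev a (Suc n))"
    proof (cases "a < x")
      case False
      then show ?thesis using Ga[OF x] eta by (simp add: measure_nonneg) (smt (verit) measure_nonneg mult_nonneg_nonneg of_nat_0_le_iff)
    next
      case True
      interpret K: prob_space "K x" by (rule mc_K_prob[OF mc])
      have GmK: "G \<in> borel_measurable (K x)"
        using Gm by (subst measurable_cong_sets[OF mc_K_sets[OF mc] refl])
      have intG: "integrable (K x) G"
        by (rule K.integrable_const_bound[where B=1]) (use G1 Gl GmK in \<open>auto simp: abs_le_iff\<close>)
      have intm: "integrable (K x) (\<lambda>y. measure (P y) (Ev a n))"
        by (rule K.integrable_const_bound[where B=1]) (auto intro: mc_m_meas[OF mc Ev_sets] prob_space.prob_le_1[OF mc_P_prob[OF mc]])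
      have "G x - real (Suc n) * \<eta> = (G x - \<eta>) - real n * \<eta>" by (simp add: algebra_simps)
      also have "\<dots> \<le> (\<integral>y. G y \<partial>K x) - real n * \<eta>" using step[OF x True] by simp
      also have "\<dots> = (\<integral>y. G y - real n * \<eta> \<partial>K x)"
        using intG by (simp add: K.prob_space)
      also have "\<dots> \<le> (\<integral>y. measure (P y) (Ev a n) \<partial>K x)"
        by (rule integral_mono_AE) (use intG intm mc_AEX[OF mc x] Suc.IH in \<open>auto elim!: eventually_mono\<close>)
      also have "\<dots> = measure (P x) (Ev a (Suc n))" using mc_m_rec[OF mc x True] by simp
      finally show ?thesis .
    qed
  qed
qed



definition hh :: "real \<Rightarrow> real \<Rightarrow> real" where "hh e s = s powr e / (1 + s powr e)"
definition hd1 :: "real \<Rightarrow> real \<Rightarrow> real" where "hd1 e s = e * s powr (e - 1) / (1 + s powr e)^2"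
definition hd2 :: "real \<Rightarrow> real \<Rightarrow> real" where
  "hd2 e s = e * ((e - 1) * s powr (e - 2) * (1 + s powr e) - 2 * e * s powr (e - 1) * s powr (e - 1)) / (1 + s powr e)^3"

lemma hh_deriv: "0 < s \<Longrightarrow> (hh e has_real_derivative hd1 e s) (at s)"
  unfolding hh_def hd1_def
  apply (rule derivative_eq_intros refl | simp)+
  apply (smt (verit) powr_ge_zero)
  apply (simp add: power2_eq_square algebra_simps)
  done

lemma hd1_deriv: "0 < s \<Longrightarrow> (hd1 e has_real_derivative hd2 e s) (at s)"
  unfolding hd2_def hd1_def
  apply (rule derivative_eq_intros refl | simp)+
  apply (smt (verit) powr_ge_zero)
  subgoal
  proof -
    assume s: "0 < s"
    define A where "A = 1 + s powr e"
    have A: "A > 0" unfolding A_def by (smt (verit) powr_ge_zero)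
    have ee: "e - 1 - 1 = e - 2" by simp
    show ?thesis unfolding A_def[symmetric] ee
      using A by (simp add: field_simps power2_eq_square power3_eq_cube)
  qed
  done

lemma pow_em1_le: "0 < (s::real) \<Longrightarrow> 1 \<le> e \<Longrightarrow> s powr (e - 1) \<le> 1 + s powr e"
proof (cases "s \<le> 1")
  case True
  assume "0 < s" "1 \<le> e"
  then have "s powr (e - 1) \<le> 1" using True powr_le1[of "e - 1" s] by auto
  then show ?thesis by (smt (verit) powr_ge_zero)
next
  case False
  assume "0 < s" "1 \<le> e"
  then have "s powr (e - 1) \<le> s powr e" using False by (intro powr_mono) auto
  then show ?thesis by simp
qed

lemma hd1_nonneg: "0 < s \<Longrightarrow> 0 \<le> e \<Longrightarrow> 0 \<le> hd1 e s"
  unfolding hd1_def by simp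

lemma hd1_le: "0 < s \<Longrightarrow> 1 \<le> e \<Longrightarrow> hd1 e s \<le> e"
proof -
  assume s: "0 < s" and e: "1 \<le> e"
  define A where "A = 1 + s powr e"
  have A: "1 \<le> A" unfolding A_def by simp
  have "s powr (e - 1) \<le> A" unfolding A_def by (rule pow_em1_le[OF s e])
  also have "A \<le> A^2" using A by (simp add: power2_eq_square)
  finally have "e * s powr (e - 1) \<le> e * A^2" using e by simp
  then show ?thesis unfolding hd1_def A_def[symmetric] using A by (simp add: field_simps)
qed

lemma hd1_le2: "0 < s \<Longrightarrow> 0 \<le> e \<Longrightarrow> hd1 e s \<le> e * s powr (e - 1)"
proof -
  assume s: "0 < s" and e: "0 \<le> e"
  define d where "d = (1 + s powr e)^2"
  have d: "1 \<le> d" unfolding d_def by simp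
  define x where "x = e * s powr (e - 1)"
  have x: "0 \<le> x" unfolding x_def using e by simp
  have "x \<le> x * d" using mult_left_mono[OF d x] by simp
  then have "x / d \<le> x" using d by (simp add: divide_le_eq)
  then show ?thesis unfolding hd1_def d_def[symmetric] x_def[symmetric] .
qed

lemma hd2_ge: "0 < s \<Longrightarrow> 1 \<le> e \<Longrightarrow> e \<le> 2 \<Longrightarrow> -8 \<le> hd2 e s"
proof -
  assume s: "0 < s" and e: "1 \<le> e" "e \<le> 2"
  define A where "A = 1 + s powr e"
  have A: "1 \<le> A" unfolding A_def by simp
  have A3: "0 < A^3" using A by simp
  define q where "q = s powr (e - 1)"
  have q: "0 \<le> q" "q \<le> A" unfolding q_def A_def using pow_em1_le[OF s e(1)] by auto
  define U where "U = e * ((e - 1) * s powr (e - 2) * A)"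
  have U: "0 \<le> U" unfolding U_def using e A by (intro mult_nonneg_nonneg) auto
  define V where "V = e * (2 * e * q * q)"
  have "q * q \<le> A * A" using q by (intro mult_mono) auto
  also have "\<dots> \<le> A^3" using A by (simp add: power3_eq_cube)
  finally have qq: "q * q \<le> A^3" .
  have ee: "e * e \<le> 2 * 2" by (rule mult_mono) (use e in auto)
  have "V = (2 * (e * e)) * (q * q)" unfolding V_def by (simp add: algebra_simps)
  also have "\<dots> \<le> 8 * A^3" by (rule mult_mono) (use ee qq q in auto)
  finally have V: "V \<le> 8 * A^3" .
  have h: "hd2 e s = (U - V) / A^3" unfolding hd2_def U_def V_def A_def q_def
    by (simp add: right_diff_distrib)
  have "-8 * A^3 \<le> U - V" using U V by simp
  then have "-8 \<le> (U - V) / A^3" using A3 by (simp add: le_divide_eq)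
  then show ?thesis using h by simp
qed

lemma hh_tangent:
  assumes s: "0 < s" and t: "0 < t" and e: "1 \<le> e" "e \<le> 2"
  shows "hh e s + hd1 e s * (t - s) - 4 * (t - s)^2 \<le> hh e t"
proof -
  define f where "f = (\<lambda>x. hh e x + 4 * x^2)"
  have cv: "convex_on {0<..} f"
  proof (rule f''_ge0_imp_convex[where f' = "\<lambda>x. hd1 e x + 8 * x" and f'' = "\<lambda>x. hd2 e x + 8"])
    show "convex ({0<..} :: real set)" by simp
    fix x :: real assume x: "x \<in> {0<..}"
    show "DERIV f x :> hd1 e x + 8 * x" unfolding f_def
      using x by (auto intro!: derivative_eq_intros hh_deriv)
    show "DERIV (\<lambda>x. hd1 e x + 8 * x) x :> hd2 e x + 8"
      using x by (auto intro!: derivative_eq_intros hd1_deriv)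
    show "0 \<le> hd2 e x + 8" using hd2_ge[of x e] x e by auto
  qed
  have d0: "DERIV f s :> hd1 e s + 8 * s" unfolding f_def
      using s by (auto intro!: derivative_eq_intros hh_deriv)
  have d: "(f has_field_derivative hd1 e s + 8 * s) (at s within {0<..})"
    by (rule has_field_derivative_at_within[OF d0])
  have "(hd1 e s + 8 * s) * (t - s) \<le> f t - f s"
    by (rule convex_on_imp_above_tangent[OF cv _ _ _ d]) (use s t in \<open>auto simp: interior_open\<close>)
  then show ?thesis unfolding f_def by (simp add: power2_eq_square algebra_simps)
qed

lemma hh_mono: "0 \<le> s \<Longrightarrow> s \<le> t \<Longrightarrow> 0 \<le> e \<Longrightarrow> hh e s \<le> hh e t"
proof -
  assume st: "0 \<le> s" "s \<le> t" "0 \<le> e"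
  have ab: "s powr e \<le> t powr e" using st by (intro powr_mono2) auto
  define a where "a = s powr e"
  define b where "b = t powr e"
  have a: "0 \<le> a" "a \<le> b" unfolding a_def b_def using ab by auto
  have "a * (1 + b) \<le> b * (1 + a)" using a by (simp add: algebra_simps)
  then have "a / (1 + a) \<le> b / (1 + b)" using a by (simp add: divide_simps)
  then show ?thesis unfolding hh_def a_def b_def .
qed

lemma hh_lip:
  assumes s: "0 < s" and t: "0 < t" and e: "1 \<le> e"
  shows "\<bar>hh e t - hh e s\<bar> \<le> e * \<bar>t - s\<bar>"
proof -
  have "norm (hh e t - hh e s) \<le> e * norm (t - s)"
  proof (rule field_differentiable_bound[where S="{0<..}" and f'="hd1 e"])
    show "convex ({0<..} :: real set)" by simp
    fix z :: real assume z: "z \<in> {0<..}"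
    show "(hh e has_field_derivative hd1 e z) (at z within {0<..})"
      using hh_deriv z by (auto intro: has_field_derivative_at_within)
    show "norm (hd1 e z) \<le> e" using hd1_le[of z e] hd1_nonneg[of z e] z e by auto
  qed (use s t in auto)
  then show ?thesis by simp
qed

lemma hh_taylor:
  assumes s: "0 < s" and t: "0 < t" and e: "1 \<le> e" "e \<le> 2" and p: "1 \<le> p" "p \<le> 2"
  shows "hh e s + hd1 e s * (t - s) - 4 * \<bar>t - s\<bar> powr p \<le> hh e t"
proof (cases "\<bar>t - s\<bar> \<le> 1")
  case True
  have "\<bar>t - s\<bar> powr 2 \<le> \<bar>t - s\<bar> powr p"
    using True p by (intro powr_mono') auto
  then have "(t - s)^2 \<le> \<bar>t - s\<bar> powr p"
    by simp
  then show ?thesis using hh_tangent[OF s t e] by linarith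
next
  case False
  have "\<bar>t - s\<bar> powr 1 \<le> \<bar>t - s\<bar> powr p"
    using False p by (intro powr_mono) auto
  then have a: "\<bar>t - s\<bar> \<le> \<bar>t - s\<bar> powr p" using False by simp
  have b: "hh e s - e * \<bar>t - s\<bar> \<le> hh e t"
    using hh_lip[OF s t e(1)] by linarith
  have c: "\<bar>hd1 e s * (t - s)\<bar> \<le> e * \<bar>t - s\<bar>"
    using hd1_le[OF s e(1)] hd1_nonneg[of s e] s e by (simp add: abs_mult mult_right_mono)
  have "e * \<bar>t - s\<bar> \<le> 2 * \<bar>t - s\<bar>" using e by (simp add: mult_right_mono)
  moreover have "hd1 e s * (t - s) \<le> \<bar>hd1 e s * (t - s)\<bar>" by simp
  ultimately show ?thesis using a b c by (smt (verit))
qed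



lemma pow2_powr: "((2::real)^k) powr s = (2 powr s)^k"
proof (induction k)
  case 0 then show ?case by simp
next
  case (Suc k)
  have "((2::real)^Suc k) powr s = (2 * 2^k) powr s" by simp
  also have "\<dots> = 2 powr s * (2^k) powr s" by (simp add: powr_mult)
  finally show ?case using Suc by simp
qed

lemma ennreal_le_suminf: "(g::nat\<Rightarrow>ennreal) k \<le> suminf g"
  using sum_le_suminf[OF summableI, of "{k}" g] by simp

lemma dyadic_cover:
  fixes v Y :: real
  assumes Y: "0 < Y" and v: "Y < v"
  shows "\<exists>k. 2^k * Y < v \<and> v \<le> 2^(Suc k) * Y"
proof -
  obtain n where n: "v / Y < 2^n" using real_arch_pow[of 2 "v / Y"] by auto
  then have ex: "\<exists>n. v \<le> 2^n * Y" using Y by (auto simp: field_simps intro!: exI[of _ n])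
  define m where "m = (LEAST n. v \<le> 2^n * Y)"
  have m: "v \<le> 2^m * Y" unfolding m_def by (rule LeastI_ex[OF ex])
  have m0: "m \<noteq> 0"
  proof
    assume "m = 0" then show False using m v by simp
  qed
  then obtain k where k: "m = Suc k" by (cases m) auto
  have "\<not> v \<le> 2^k * Y" using not_less_Least[of k "\<lambda>n. v \<le> 2^n * Y"] k unfolding m_def by simp
  then show ?thesis using m k by (intro exI[of _ k]) auto
qed

lemma moment_bound:
  fixes M :: "'a measure" and f :: "'a \<Rightarrow> real"
  assumes M: "prob_space M" and fm: "f \<in> borel_measurable M" and f0: "\<And>x. 0 \<le> f x"
    and Y: "1 \<le> Y" and p: "0 < p" "p < \<alpha>" and C: "0 \<le> C"
    and tail: "\<And>t. Y \<le> t \<Longrightarrow> measure M {x\<in>space M. t < f x} \<le> C * t powr (-\<alpha>)"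
  shows "(\<integral>\<^sup>+x. ennreal (f x powr p) \<partial>M) \<le> ennreal (Y powr p + C * 2 powr p * Y powr (p - \<alpha>) / (1 - 2 powr (p - \<alpha>)))"
proof -
  interpret prob_space M by (rule M)
  define r where "r = (2::real) powr (p - \<alpha>)"
  have r: "0 < r" "r < 1" unfolding r_def using p powr_less_mono[of "p - \<alpha>" 0 "2::real"] by auto
  define c where "c k = ((2::real)^(Suc k) * Y) powr p" for k
  define A where "A k = {x\<in>space M. 2^k * Y < f x}" for k
  have A[measurable]: "A k \<in> sets M" for k unfolding A_def using fm by measurable
  have pw: "ennreal (f x powr p) \<le> ennreal (Y powr p) + (\<Sum>k. ennreal (c k) * indicator (A k) x)" if x: "x \<in> space M" for x
  proof (cases "f x \<le> Y")
    case True
    then have "f x powr p \<le> Y powr p" using f0 p by (intro powr_mono2) auto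
    then show ?thesis by (simp add: add_increasing2)
  next
    case False
    then obtain k where k: "2^k * Y < f x" "f x \<le> 2^(Suc k) * Y" using dyadic_cover[of Y "f x"] Y by auto
    have "f x powr p \<le> c k" unfolding c_def using k f0 p by (intro powr_mono2) auto
    then have "ennreal (f x powr p) \<le> ennreal (c k) * indicator (A k) x"
      using k x by (simp add: A_def ennreal_leI)
    also have "\<dots> \<le> (\<Sum>k. ennreal (c k) * indicator (A k) x)"
      by (rule ennreal_le_suminf)
    finally show ?thesis by (simp add: add_increasing)
  qed
  have "(\<integral>\<^sup>+x. ennreal (f x powr p) \<partial>M) \<le> (\<integral>\<^sup>+x. ennreal (Y powr p) + (\<Sum>k. ennreal (c k) * indicator (A k) x) \<partial>M)"
    by (rule nn_integral_mono) (use pw in auto)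
  also have "\<dots> = ennreal (Y powr p) + (\<Sum>k. ennreal (c k) * emeasure M (A k))"
    by (subst nn_integral_add) (auto simp: nn_integral_suminf nn_integral_cmult_indicator emeasure_space_1)
  also have "(\<Sum>k. ennreal (c k) * emeasure M (A k)) \<le> (\<Sum>k. ennreal (C * 2 powr p * Y powr (p - \<alpha>) * r^k))"
  proof (rule suminf_le[OF _ summableI summableI])
    fix k
    have t: "measure M (A k) \<le> C * (2^k * Y) powr (-\<alpha>)"
      unfolding A_def by (rule tail) (use Y in \<open>simp add: mult_le_cancel_right1 one_le_power\<close>)
    have "c k * (C * (2^k * Y) powr (-\<alpha>)) = C * 2 powr p * Y powr (p - \<alpha>) * r^k"
    proof -
      have "c k = 2 powr p * (2^k) powr p * Y powr p"
        unfolding c_def using Y by (simp add: powr_mult)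
      moreover have "(2^k * Y) powr (-\<alpha>) = (2^k) powr (-\<alpha>) * Y powr (-\<alpha>)"
        using Y by (simp add: powr_mult)
      moreover have "(2^k) powr p * (2^k) powr (-\<alpha>) = r^k"
        unfolding r_def pow2_powr by (simp add: powr_add[symmetric] power_mult_distrib[symmetric])
      moreover have "Y powr p * Y powr (-\<alpha>) = Y powr (p - \<alpha>)" by (simp add: powr_add[symmetric])
      ultimately show ?thesis by (simp add: algebra_simps)
    qed
    then have "c k * measure M (A k) \<le> C * 2 powr p * Y powr (p - \<alpha>) * r^k"
      using t unfolding c_def by (metis mult_left_mono powr_ge_zero)
    then show "ennreal (c k) * emeasure M (A k) \<le> ennreal (C * 2 powr p * Y powr (p - \<alpha>) * r^k)"
      by (simp add: emeasure_eq_measure ennreal_mult[symmetric] c_def ennreal_leI)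
  qed
  also have "\<dots> = ennreal (C * 2 powr p * Y powr (p - \<alpha>) / (1 - r))"
  proof -
    have s: "summable (\<lambda>k. C * 2 powr p * Y powr (p - \<alpha>) * r^k)"
      using r by (intro summable_mult summable_geometric) auto
    have "(\<Sum>k. C * 2 powr p * Y powr (p - \<alpha>) * r^k) = C * 2 powr p * Y powr (p - \<alpha>) / (1 - r)"
      using r by (subst suminf_mult) (auto simp: summable_geometric suminf_geometric)
    then show ?thesis using s r C by (subst suminf_ennreal2) auto
  qed
  finally show ?thesis unfolding r_def
    by (smt (verit) add_left_mono ennreal_plus order_trans powr_ge_zero divide_nonneg_nonneg mult_nonneg_nonneg C r(2) r_def)
qed



lemma hh_meas[measurable]: "(\<lambda>y. hh e (f y)) \<in> borel_measurable M" if [measurable]: "f \<in> borel_measurable M"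
  unfolding hh_def by measurable

lemma hh_bounds: "0 \<le> hh e s" "hh e s \<le> 1"
proof -
  have a: "0 \<le> s powr e" by simp
  have b: "0 < 1 + s powr e" using a by linarith
  show "0 \<le> hh e s" unfolding hh_def using a b by simp
  show "hh e s \<le> 1" unfolding hh_def using a b by (simp add: divide_le_eq)
qed

lemma theta_meas[measurable]: "theta \<in> borel_measurable S"
  unfolding theta_def by measurable

lemma drift_step:
  assumes mc: "markov_chain_on X K P" and x: "x \<in> X" and x1: "1 \<le> x"
    and g: "0 \<le> \<gamma>" "\<gamma> \<le> 1" and p: "1 + \<gamma> \<le> p" "p \<le> 2" and z: "1 \<le> z"
    and intt: "integrable (P x) theta" and intp: "integrable (P x) (\<lambda>w. \<bar>theta w\<bar> powr p)"
    and mom: "(\<integral>w. \<bar>theta w\<bar> powr p \<partial>P x) \<le> Mp"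
    and C: "0 \<le> C" and drift: "-C \<le> x powr \<gamma> * mu P x"
  shows "hh (1 + \<gamma>) ((x + 1) / z) - (4 * C + 4 * Mp) / z powr (1 + \<gamma>)
         \<le> (\<integral>y. hh (1 + \<gamma>) ((y + 1) / z) \<partial>K x)"
proof -
  define e where "e = 1 + \<gamma>"
  have e: "1 \<le> e" "e \<le> 2" unfolding e_def using g by auto
  define s where "s = (x + 1) / z"
  have s: "0 < s" unfolding s_def using x1 z by simp
  define D where "D = hd1 e s / z"
  have D0: "0 \<le> D" unfolding D_def using hd1_nonneg[OF s, of e] e z by simp
  define g where "g y = hh e ((y + 1) / z)" for y
  interpret Px: prob_space "P x" by (rule mc_P_prob[OF mc])
  have sP: "sets (P x) = sets S" by (rule mc_P_sets[OF mc])
  have snth1[measurable]: "(\<lambda>w. w !! 1) \<in> P x \<rightarrow>\<^sub>M borel"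
    by (subst measurable_cong_sets[OF sP refl]) measurable
  have thmeas[measurable]: "theta \<in> borel_measurable (P x)"
    by (subst measurable_cong_sets[OF sP refl]) measurable
  have gm[measurable]: "g \<in> borel_measurable borel" unfolding g_def by measurable
  have gm1: "(\<lambda>w. g (w !! 1)) \<in> borel_measurable (P x)" by (rule measurable_compose[OF snth1 gm])
  have intg: "integrable (P x) (\<lambda>w. g (w !! 1))"
    by (rule Px.integrable_const_bound[where B=1]) (use gm1 in \<open>auto simp: g_def hh_bounds\<close>)
  have eqK: "(\<integral>y. g y \<partial>K x) = (\<integral>w. g (w !! 1) \<partial>P x)"
    using integral_distr[OF snth1 gm] mc_distr1[OF mc x] by simp
  have AE1: "AE w in P x. w !! 1 \<in> X"
  proof -
    have "AE y in distr (P x) borel (\<lambda>w. w !! 1). y \<in> X"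
      unfolding mc_distr1[OF mc x] by (rule mc_AEX[OF mc x])
    then show ?thesis using mc_D(2)[OF mc] by (subst (asm) AE_distr_iff[OF snth1]) auto
  qed
  have pw: "AE w in P x. g x + D * theta w - (4 / z powr p) * \<bar>theta w\<bar> powr p \<le> g (w !! 1)"
    using AE1 mc_AE0[OF mc x]
  proof eventually_elim
    case (elim w)
    have w0: "0 \<le> w !! 1" using elim(1) mc_D(1)[OF mc] by auto
    define t where "t = (w !! 1 + 1) / z"
    have t: "0 < t" unfolding t_def using w0 z by simp
    have ts: "t - s = theta w / z" unfolding t_def s_def theta_def using elim(2) z
      by (simp add: diff_divide_distrib[symmetric])
    have "hh e s + hd1 e s * (t - s) - 4 * \<bar>t - s\<bar> powr p \<le> hh e t"
      by (rule hh_taylor[OF s t e]) (use p g in auto)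
    moreover have "\<bar>t - s\<bar> powr p = \<bar>theta w\<bar> powr p / z powr p"
      unfolding ts using z by (simp add: powr_divide)
    moreover have "hd1 e s * (t - s) = D * theta w" unfolding ts D_def by simp
    ultimately show ?case unfolding g_def s_def[symmetric] t_def[symmetric] by simp
  qed
  have "(\<integral>w. g x + D * theta w - (4 / z powr p) * \<bar>theta w\<bar> powr p \<partial>P x) \<le> (\<integral>w. g (w !! 1) \<partial>P x)"
    by (rule integral_mono_AE[OF _ intg pw]) (use intt intp in auto)
  moreover have "(\<integral>w. g x + D * theta w - (4 / z powr p) * \<bar>theta w\<bar> powr p \<partial>P x)
      = g x + D * mu P x - (4 / z powr p) * (\<integral>w. \<bar>theta w\<bar> powr p \<partial>P x)"
    using intt intp by (simp add: Px.prob_space mu_def)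
  moreover have "(4 / z powr p) * (\<integral>w. \<bar>theta w\<bar> powr p \<partial>P x) \<le> 4 * Mp / z powr e"
  proof -
    have "0 \<le> (\<integral>w. \<bar>theta w\<bar> powr p \<partial>P x)" by (intro integral_nonneg_AE) auto
    then have Mp: "0 \<le> Mp" using mom by linarith
    have "(4 / z powr p) * (\<integral>w. \<bar>theta w\<bar> powr p \<partial>P x) \<le> (4 / z powr p) * Mp"
      using mom z by (intro mult_left_mono) auto
    also have "\<dots> \<le> 4 * Mp / z powr e"
    proof -
      have "z powr e \<le> z powr p" using z p by (intro powr_mono) (auto simp: e_def)
      then show ?thesis using Mp z by (simp add: frac_le mult.commute)
    qed
    finally show ?thesis .
  qed
  moreover have "- (4 * C / z powr e) \<le> D * mu P x"
  proof (cases "0 \<le> mu P x")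
    case True
    have "0 \<le> D * mu P x" using True D0 by simp
    moreover have "0 \<le> 4 * C / z powr e" using C z by simp
    ultimately show ?thesis by linarith
  next
    case False
    have xg: "0 < x powr \<gamma>" using x1 by simp
    have mu: "- mu P x \<le> C / x powr \<gamma>" using drift xg by (simp add: field_simps)
    have "D \<le> e * s powr \<gamma> / z" unfolding D_def using hd1_le2[OF s, of e] e z
      by (simp add: e_def divide_right_mono)
    have "D * (- mu P x) \<le> (e * s powr \<gamma> / z) * (C / x powr \<gamma>)"
      using \<open>D \<le> _\<close> mu D0 False by (intro mult_mono) auto
    also have "\<dots> = e * C * ((x + 1) / x) powr \<gamma> / z powr e"
      unfolding s_def e_def using x1 z
      by (simp add: powr_divide powr_add field_simps)
    also have "\<dots> \<le> 2 * C * 2 / z powr e"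
    proof -
      have "(x + 1) / x \<le> 2" using x1 by (simp add: field_simps)
      then have "((x + 1) / x) powr \<gamma> \<le> 2 powr \<gamma>" using x1 g by (intro powr_mono2) auto
      also have "\<dots> \<le> 2 powr 1" using g by (intro powr_mono) auto
      finally have "((x + 1) / x) powr \<gamma> \<le> 2" by simp
      then have "e * C * ((x + 1) / x) powr \<gamma> \<le> 2 * C * 2"
        using e C by (intro mult_mono) auto
      then show ?thesis using z by (simp add: divide_right_mono)
    qed
    finally show ?thesis by simp
  qed
  ultimately have "g x - (4 * C + 4 * Mp) / z powr e \<le> (\<integral>w. g (w !! 1) \<partial>P x)"
    by (simp add: add_divide_distrib diff_divide_distrib)
  then have "g x - (4 * C + 4 * Mp) / z powr e \<le> (\<integral>y. g y \<partial>K x)" using eqK by simp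
  then show ?thesis unfolding g_def e_def .
qed



lemma setup_tail:
  assumes "cond_T X P \<alpha> \<beta> c"
  obtains x0 Y1 B where "0 \<le> x0" "1 \<le> Y1" "0 \<le> B"
   "\<And>t x. Y1 \<le> t \<Longrightarrow> x \<in> X \<Longrightarrow> x0 \<le> x \<Longrightarrow>
       measure (P x) {w\<in>space (P x). t < pos_part (theta w)} \<le> (5 * c / 4) * t powr (-\<alpha>)"
   "\<And>t x. Y1 \<le> t \<Longrightarrow> x \<in> X \<Longrightarrow> x0 \<le> x \<Longrightarrow>
       (3 * c / 4) * t powr (-\<alpha>) \<le> measure (P x) {w\<in>space (P x). t < pos_part (theta w)}"
   "\<And>x. x \<in> X \<Longrightarrow> x0 \<le> x \<Longrightarrow> (\<integral>\<^sup>+w. ennreal (neg_part (theta w) powr \<beta>) \<partial>P x) \<le> ennreal B"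
proof -
  from assms have c: "c > 0" unfolding cond_T_def by auto
  from assms obtain x0 where x0: "x0 \<ge> 0"
    and tl: "\<forall>\<epsilon>>0. \<exists>Y. \<forall>y\<ge>Y. \<forall>x\<in>X. x \<ge> x0 \<longrightarrow>
            \<bar>y powr \<alpha> * measure (P x) {w \<in> space (P x). pos_part (theta w) > y} - c\<bar> \<le> \<epsilon>"
    and nb: "\<exists>B::real. \<forall>x\<in>X. x \<ge> x0 \<longrightarrow>
            (\<integral>\<^sup>+w. ennreal (neg_part (theta w) powr \<beta>) \<partial>P x) \<le> ennreal B"
    unfolding cond_T_def by blast
  obtain Y where Y: "\<forall>y\<ge>Y. \<forall>x\<in>X. x \<ge> x0 \<longrightarrow>
            \<bar>y powr \<alpha> * measure (P x) {w \<in> space (P x). pos_part (theta w) > y} - c\<bar> \<le> c / 4"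
    using tl c by (meson divide_pos_pos zero_less_numeral)
  obtain B where B: "\<forall>x\<in>X. x \<ge> x0 \<longrightarrow>
            (\<integral>\<^sup>+w. ennreal (neg_part (theta w) powr \<beta>) \<partial>P x) \<le> ennreal B" using nb by blast
  define Y1 where "Y1 = max Y 1"
  show ?thesis
  proof (rule that[of x0 Y1 "max B 0"])
    show "0 \<le> x0" "1 \<le> Y1" "0 \<le> max B 0" using x0 by (auto simp: Y1_def)
  next
    fix x assume "x \<in> X" "x0 \<le> x"
    then have "(\<integral>\<^sup>+w. ennreal (neg_part (theta w) powr \<beta>) \<partial>P x) \<le> ennreal B" using B by blast
    also have "\<dots> \<le> ennreal (max B 0)" by (rule ennreal_leI) simp
    finally show "(\<integral>\<^sup>+w. ennreal (neg_part (theta w) powr \<beta>) \<partial>P x) \<le> ennreal (max B 0)" .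
  next
    fix t x assume t: "Y1 \<le> t" and x: "x \<in> X" "x0 \<le> x"
    have tp: "0 < t powr \<alpha>" using t by (simp add: Y1_def)
    have "\<bar>t powr \<alpha> * measure (P x) {w \<in> space (P x). pos_part (theta w) > t} - c\<bar> \<le> c / 4"
      using Y t x by (auto simp: Y1_def)
    note hh = abs_le_D1[OF this] abs_le_D2[OF this]
    have h1: "t powr \<alpha> * measure (P x) {w \<in> space (P x). t < pos_part (theta w)} \<le> 5 * c / 4"
      using hh(1) by linarith
    have h2: "3 * c / 4 \<le> t powr \<alpha> * measure (P x) {w \<in> space (P x). t < pos_part (theta w)}"
      using hh(2) by linarith
    note h = h1 h2
    have inv: "t powr (-\<alpha>) = 1 / t powr \<alpha>" using t by (simp add: powr_minus_divide)
    show "measure (P x) {w\<in>space (P x). t < pos_part (theta w)} \<le> (5 * c / 4) * t powr (-\<alpha>)"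
      using h(1) tp unfolding inv by (simp add: field_simps)
    show "(3 * c / 4) * t powr (-\<alpha>) \<le> measure (P x) {w\<in>space (P x). t < pos_part (theta w)}"
      using h(2) tp unfolding inv by (simp add: field_simps)
  qed
qed

lemma pos_neg_powr: "0 < p \<Longrightarrow> \<bar>v\<bar> powr p = pos_part v powr p + neg_part v powr p"
  unfolding pos_part_def neg_part_def by auto

lemma neg_le: "0 < p \<Longrightarrow> p \<le> \<beta> \<Longrightarrow> 0 \<le> (u::real) \<Longrightarrow> u powr p \<le> 1 + u powr \<beta>"
proof (cases "u \<le> 1")
  case True
  assume "0 < p" "p \<le> \<beta>" "0 \<le> u"
  then have "u powr p \<le> 1" using True powr_le1[of p u] by auto
  then show ?thesis by (smt (verit) powr_ge_zero)
next
  case False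
  assume "0 < p" "p \<le> \<beta>" "0 \<le> u"
  then have "u powr p \<le> u powr \<beta>" using False by (intro powr_mono) auto
  then show ?thesis by simp
qed

lemma setup_moment:
  assumes mc: "markov_chain_on X K P" and x: "x \<in> X" and Y1: "1 \<le> Y1" and B: "0 \<le> B"
    and p1: "1 \<le> p" and p23: "p < \<alpha>" "p \<le> \<beta>" and c: "0 \<le> c"
    and up: "\<And>t. Y1 \<le> t \<Longrightarrow> measure (P x) {w\<in>space (P x). t < pos_part (theta w)} \<le> c * t powr (-\<alpha>)"
    and nb: "(\<integral>\<^sup>+w. ennreal (neg_part (theta w) powr \<beta>) \<partial>P x) \<le> ennreal B"
  defines "Mp \<equiv> Y1 powr p + c * 2 powr p * Y1 powr (p - \<alpha>) / (1 - 2 powr (p - \<alpha>)) + 1 + B"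
  shows "integrable (P x) theta" "integrable (P x) (\<lambda>w. \<bar>theta w\<bar> powr p)"
    "(\<integral>w. \<bar>theta w\<bar> powr p \<partial>P x) \<le> Mp"
proof -
  have p: "0 < p" "p < \<alpha>" "p \<le> \<beta>" using p1 p23 by auto
  interpret Px: prob_space "P x" by (rule mc_P_prob[OF mc])
  have sP: "sets (P x) = sets S" by (rule mc_P_sets[OF mc])
  have thm'[measurable]: "theta \<in> borel_measurable (P x)"
    by (subst measurable_cong_sets[OF sP refl]) measurable
  have posm[measurable]: "(\<lambda>w. pos_part (theta w)) \<in> borel_measurable (P x)"
    unfolding pos_part_def by measurable
  have negm[measurable]: "(\<lambda>w. neg_part (theta w)) \<in> borel_measurable (P x)"
    unfolding neg_part_def by measurable
  have m1: "(\<integral>\<^sup>+w. ennreal (pos_part (theta w) powr p) \<partial>P x)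
      \<le> ennreal (Y1 powr p + c * 2 powr p * Y1 powr (p - \<alpha>) / (1 - 2 powr (p - \<alpha>)))"
    by (rule moment_bound[OF Px.prob_space_axioms posm _ Y1 p(1,2) c up]) (auto simp: pos_part_def)
  have "(\<integral>\<^sup>+w. ennreal (neg_part (theta w) powr p) \<partial>P x) \<le> (\<integral>\<^sup>+w. 1 + ennreal (neg_part (theta w) powr \<beta>) \<partial>P x)"
  proof (rule nn_integral_mono)
    fix w
    have u: "0 \<le> neg_part (theta w)" by (simp add: neg_part_def)
    have "ennreal (neg_part (theta w) powr p) \<le> ennreal (1 + neg_part (theta w) powr \<beta>)"
      by (rule ennreal_leI) (rule neg_le[OF p(1,3) u])
    then show "ennreal (neg_part (theta w) powr p) \<le> 1 + ennreal (neg_part (theta w) powr \<beta>)"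
      by (simp add: ennreal_plus)
  qed
  also have "\<dots> = 1 + (\<integral>\<^sup>+w. ennreal (neg_part (theta w) powr \<beta>) \<partial>P x)"
    by (subst nn_integral_add) (auto simp: Px.emeasure_space_1)
  also have "\<dots> \<le> 1 + ennreal B" using nb by (rule add_left_mono)
  finally have m2: "(\<integral>\<^sup>+w. ennreal (neg_part (theta w) powr p) \<partial>P x) \<le> ennreal (1 + B)"
    using B by (simp add: ennreal_plus)
  have nn: "(\<integral>\<^sup>+w. ennreal (\<bar>theta w\<bar> powr p) \<partial>P x)
     = (\<integral>\<^sup>+w. ennreal (pos_part (theta w) powr p) \<partial>P x) + (\<integral>\<^sup>+w. ennreal (neg_part (theta w) powr p) \<partial>P x)"
  proof -
    have "(\<integral>\<^sup>+w. ennreal (\<bar>theta w\<bar> powr p) \<partial>P x)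
        = (\<integral>\<^sup>+w. ennreal (pos_part (theta w) powr p) + ennreal (neg_part (theta w) powr p) \<partial>P x)"
      by (rule nn_integral_cong) (simp only: pos_neg_powr[OF p(1)] ennreal_plus powr_ge_zero)
    also have "\<dots> = (\<integral>\<^sup>+w. ennreal (pos_part (theta w) powr p) \<partial>P x) + (\<integral>\<^sup>+w. ennreal (neg_part (theta w) powr p) \<partial>P x)"
      by (rule nn_integral_add) measurable
    finally show ?thesis .
  qed
  have tot: "(\<integral>\<^sup>+w. ennreal (\<bar>theta w\<bar> powr p) \<partial>P x) \<le> ennreal Mp"
  proof -
    have "(\<integral>\<^sup>+w. ennreal (\<bar>theta w\<bar> powr p) \<partial>P x) \<le>
       ennreal (Y1 powr p + c * 2 powr p * Y1 powr (p - \<alpha>) / (1 - 2 powr (p - \<alpha>))) + ennreal (1 + B)"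
      unfolding nn by (rule add_mono[OF m1 m2])
    also have "\<dots> = ennreal Mp"
    proof -
      have r: "2 powr (p - \<alpha>) < (1::real)" using p powr_less_mono[of "p - \<alpha>" 0 "2::real"] by auto
      have "0 \<le> c * 2 powr p * Y1 powr (p - \<alpha>) / (1 - 2 powr (p - \<alpha>))" using r c by simp
      then have "ennreal (Y1 powr p + c * 2 powr p * Y1 powr (p - \<alpha>) / (1 - 2 powr (p - \<alpha>))) + ennreal (1 + B)
          = ennreal (Y1 powr p + c * 2 powr p * Y1 powr (p - \<alpha>) / (1 - 2 powr (p - \<alpha>)) + (1 + B))"
        using B by (intro ennreal_plus[symmetric]) auto
      also have "\<dots> = ennreal Mp" unfolding Mp_def by (simp add: add.assoc)
      finally show ?thesis .
    qed
    finally show ?thesis .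
  qed
  have pm: "(\<lambda>w. \<bar>theta w\<bar> powr p) \<in> borel_measurable (P x)" by measurable
  show ip: "integrable (P x) (\<lambda>w. \<bar>theta w\<bar> powr p)"
    by (rule integrableI_bounded[OF pm]) (use tot in \<open>auto simp: less_top[symmetric] top_unique\<close>)
  show "integrable (P x) theta"
  proof (rule Bochner_Integration.integrable_bound[OF _ _ AE_I2])
    show "integrable (P x) (\<lambda>w. 1 + \<bar>theta w\<bar> powr p)" using ip by simp
    show "theta \<in> borel_measurable (P x)" by measurable
    fix w
    have "\<bar>theta w\<bar> \<le> 1 + \<bar>theta w\<bar> powr p"
    proof (cases "\<bar>theta w\<bar> \<le> 1")
      case True then show ?thesis by (smt (verit) powr_ge_zero)
    next
      case False
      then have "\<bar>theta w\<bar> powr 1 \<le> \<bar>theta w\<bar> powr p" using p1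
        by (intro powr_mono) auto
      then show ?thesis using False by simp
    qed
    then show "norm (theta w) \<le> norm (1 + \<bar>theta w\<bar> powr p)" by simp
  qed
  have "ennreal (\<integral>w. \<bar>theta w\<bar> powr p \<partial>P x) = (\<integral>\<^sup>+w. ennreal (\<bar>theta w\<bar> powr p) \<partial>P x)"
    by (rule nn_integral_eq_integral[OF ip, symmetric]) simp
  with tot have "ennreal (\<integral>w. \<bar>theta w\<bar> powr p \<partial>P x) \<le> ennreal Mp" by simp
  moreover have "0 \<le> Mp"
  proof -
    have r: "2 powr (p - \<alpha>) < (1::real)" using p powr_less_mono[of "p - \<alpha>" 0 "2::real"] by auto
    have "0 \<le> c * 2 powr p * Y1 powr (p - \<alpha>) / (1 - 2 powr (p - \<alpha>))" using r c by simp
    then show ?thesis unfolding Mp_def using B by simp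
  qed
  ultimately show "(\<integral>w. \<bar>theta w\<bar> powr p \<partial>P x) \<le> Mp" by (simp add: ennreal_le_iff)
qed



lemma drift_bound:
  assumes "Liminf (at_top \<sqinter> principal X) (\<lambda>x. ereal (x powr \<gamma> * mu P x)) > -\<infinity>"
  obtains C x1 where "0 \<le> C" "\<And>x. x \<in> X \<Longrightarrow> x1 \<le> x \<Longrightarrow> -C \<le> x powr \<gamma> * mu P x"
proof -
  obtain r where r: "ereal r < Liminf (at_top \<sqinter> principal X) (\<lambda>x. ereal (x powr \<gamma> * mu P x))"
  proof (cases "Liminf (at_top \<sqinter> principal X) (\<lambda>x. ereal (x powr \<gamma> * mu P x))" rule: ereal_cases)
    case (real L) then show ?thesis using that[of "L - 1"] by simp
  next
    case PInf then show ?thesis using that[of 0] by simp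
  next
    case MInf then show ?thesis using assms by simp
  qed
  have "eventually (\<lambda>x. ereal r < ereal (x powr \<gamma> * mu P x)) (at_top \<sqinter> principal X)"
    using less_LiminfD[OF r] by simp
  then have "eventually (\<lambda>x. x \<in> X \<longrightarrow> r < x powr \<gamma> * mu P x) at_top"
    by (simp add: eventually_inf_principal)
  then obtain x1 where x1: "\<And>x. x1 \<le> x \<Longrightarrow> x \<in> X \<longrightarrow> r < x powr \<gamma> * mu P x"
    by (auto simp: eventually_at_top_linorder)
  show ?thesis
  proof (rule that[of "max (-r) 0" x1])
    fix x assume "x \<in> X" "x1 \<le> x"
    then show "- max (-r) 0 \<le> x powr \<gamma> * mu P x" using x1 by force
  qed simp
qed

lemma hh_le_pow: "0 \<le> s \<Longrightarrow> hh e s \<le> s powr e"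
proof -
  assume "0 \<le> s"
  have a: "0 \<le> s powr e" by simp
  have b: "0 < 1 + s powr e" using a by linarith
  have "s powr e / (1 + s powr e) \<le> s powr e / 1" using a b by (intro divide_left_mono) auto
  then show ?thesis unfolding hh_def by simp
qed

lemma survive:
  assumes mc: "markov_chain_on X K P" and g: "0 \<le> \<gamma>" "\<gamma> \<le> 1" and a: "1 \<le> a" and Kc: "0 \<le> Kc"
    and hstep: "\<And>x z. x \<in> X \<Longrightarrow> a < x \<Longrightarrow> 1 \<le> z \<Longrightarrow>
        hh (1 + \<gamma>) ((x + 1) / z) - Kc / z powr (1 + \<gamma>) \<le> (\<integral>y. hh (1 + \<gamma>) ((y + 1) / z) \<partial>K x)"
    and y: "y \<in> X" and ya: "3 * (a + 1) \<le> y + 1" and n: "real n * Kc \<le> (y + 1) powr (1 + \<gamma>) / 12"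
  shows "1 / 12 \<le> measure (P y) (Ev a n)"
proof -
  define e where "e = 1 + \<gamma>"
  have e: "1 \<le> e" "e \<le> 2" using g by (auto simp: e_def)
  define z where "z = y + 1"
  have z: "1 \<le> z" using y mc_D(1)[OF mc] by (auto simp: z_def)
  define G where "G v = hh e ((v + 1) / z) - hh e ((a + 1) / z)" for v
  define \<eta> where "\<eta> = Kc / z powr e"
  have "\<forall>v\<in>X. G v - real n * \<eta> \<le> measure (P v) (Ev a n)"
  proof (rule survival_induct[OF mc])
    show "G \<in> borel_measurable borel" unfolding G_def by measurable
    fix v
    show "G v \<le> 1" "-1 \<le> G v" unfolding G_def using hh_bounds[of e] by (smt (verit))+
    show "0 \<le> \<eta>" unfolding \<eta>_def using Kc z by simp
  next
    fix v assume v: "v \<in> X" "v \<le> a"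
    have "0 \<le> v" using v mc_D(1)[OF mc] by auto
    then show "G v \<le> 0" unfolding G_def using v z e by (smt (verit) hh_mono divide_right_mono divide_nonneg_nonneg)
  next
    fix x assume x: "x \<in> X" "a < x"
    interpret K: prob_space "K x" by (rule mc_K_prob[OF mc])
    have m: "(\<lambda>v. hh e ((v + 1) / z)) \<in> borel_measurable (K x)"
      by (subst measurable_cong_sets[OF mc_K_sets[OF mc] refl]) measurable
    have int: "integrable (K x) (\<lambda>v. hh e ((v + 1) / z))"
      by (rule K.integrable_const_bound[where B=1]) (use m hh_bounds in auto)
    have "(\<integral>v. G v \<partial>K x) = (\<integral>v. hh e ((v + 1) / z) \<partial>K x) - hh e ((a + 1) / z)"
      unfolding G_def using int by (simp add: K.prob_space)
    then show "G x - \<eta> \<le> (\<integral>v. G v \<partial>K x)"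
      using hstep[OF x z] unfolding G_def \<eta>_def e_def by simp
  qed
  then have main: "G y - real n * \<eta> \<le> measure (P y) (Ev a n)" using y by blast
  have G1: "1 / 6 \<le> G y"
  proof -
    have h1: "hh e 1 = 1 / 2" unfolding hh_def by simp
    define r where "r = (a + 1) / z"
    have r: "0 \<le> r" "r \<le> 1 / 3" unfolding r_def using ya a z by (auto simp: z_def field_simps)
    have "hh e r \<le> r powr e" by (rule hh_le_pow[OF r(1)])
    also have "\<dots> \<le> r powr 1" using r e by (intro powr_mono') auto
    finally have "hh e r \<le> 1 / 3" using r by (cases "r = 0") auto
    then show ?thesis unfolding G_def r_def[symmetric] using h1 z by (simp add: z_def)
  qed
  have "real n * \<eta> \<le> 1 / 12"
  proof -
    have zp: "0 < z powr e" using z by simp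
    have "real n * \<eta> = real n * Kc / z powr e" unfolding \<eta>_def by simp
    also have "\<dots> \<le> (z powr e / 12) / z powr e" using n zp unfolding z_def e_def by (intro divide_right_mono) auto
    also have "\<dots> = 1 / 12" using zp by simp
    finally show ?thesis .
  qed
  then show ?thesis using main G1 by linarith
qed



lemma hit_lower:
  assumes "\<forall>k\<le>Suc n. a < w !! k" and q: "0 \<le> q"
  shows "ennreal (real n powr q) \<le> hit_time_pow q a w"
proof (cases "\<exists>m. w !! m \<le> a")
  case True
  define L where "L = (LEAST m. w !! m \<le> a)"
  have L: "w !! L \<le> a" unfolding L_def using True by (rule LeastI_ex)
  have "n < L"
  proof (rule ccontr)
    assume "\<not> n < L" then have "L \<le> Suc n" by simp
    then show False using assms(1) L by force
  qed
  then have "real n powr q \<le> real L powr q" using q by (intro powr_mono2) auto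
  then show ?thesis unfolding hit_time_pow_def hit_time_def using True L_def
    by (simp add: ennreal_leI)
next
  case False
  then show ?thesis unfolding hit_time_pow_def hit_time_def by simp
qed

definition Fv :: "real \<Rightarrow> nat \<Rightarrow> real set \<Rightarrow> real stream set" where
  "Fv a n I = {w\<in>space S. w !! 1 \<in> I \<and> (\<forall>k\<le>Suc n. a < w !! k)}"

lemma Fv_sets[measurable]: "I \<in> sets borel \<Longrightarrow> Fv a n I \<in> sets S"
proof -
  assume [measurable]: "I \<in> sets borel"
  have "Fv a n I = {w\<in>space S. w !! 1 \<in> I} \<inter> Ev a (Suc n)" unfolding Fv_def Ev_def by auto
  also have "\<dots> \<in> sets S" by measurable
  finally show ?thesis .
qed

lemma mc_Fv:
  assumes mc: "markov_chain_on X K P" and x: "x \<in> X" and ax: "a < x" and I: "I \<in> sets borel"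
  shows "emeasure (P x) (Fv a n I) = (\<integral>\<^sup>+y. indicator I y * emeasure (P y) (Ev a n) \<partial>K x)"
proof -
  have "emeasure (P x) (Fv a n I) = (\<integral>\<^sup>+y. emeasure (P y) {w\<in>space S. x ## w \<in> Fv a n I} \<partial>K x)"
    by (rule mc_rec[OF mc x Fv_sets[OF I]])
  also have "\<dots> = (\<integral>\<^sup>+y. emeasure (P y) {w\<in>space S. w !! 0 \<in> I \<and> (\<forall>k\<le>n. a < w !! k)} \<partial>K x)"
  proof -
    have "{w\<in>space S. x ## w \<in> Fv a n I} = {w\<in>space S. w !! 0 \<in> I \<and> (\<forall>k\<le>n. a < w !! k)}"
      unfolding Fv_def using ax by (auto simp: space_S all_le_Suc_stream)
    then show ?thesis by simp
  qed
  also have "\<dots> = (\<integral>\<^sup>+y. indicator I y * emeasure (P y) (Ev a n) \<partial>K x)"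
  proof (intro nn_integral_cong_AE, use mc_AEX[OF mc x] in eventually_elim)
    case (elim y)
    have "emeasure (P y) {w\<in>space S. w !! 0 \<in> I \<and> (\<forall>k\<le>n. a < w !! k)} = emeasure (P y) (if y \<in> I then Ev a n else {})"
    proof (rule emeasure_eq_AE)
      show "AE w in P y. (w \<in> {w\<in>space S. w !! 0 \<in> I \<and> (\<forall>k\<le>n. a < w !! k)}) = (w \<in> (if y \<in> I then Ev a n else {}))"
        using mc_AE0[OF mc elim] by eventually_elim (auto simp: Ev_def space_S)
      have "{w\<in>space S. w !! 0 \<in> I \<and> (\<forall>k\<le>n. a < w !! k)} = {w\<in>space S. w !! 0 \<in> I} \<inter> Ev a n"
        unfolding Ev_def by auto
      also have "\<dots> \<in> sets S" using I by measurable
      finally show "{w\<in>space S. w !! 0 \<in> I \<and> (\<forall>k\<le>n. a < w !! k)} \<in> sets (P y)"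
        unfolding mc_P_sets[OF mc] .
      show "(if y \<in> I then Ev a n else {}) \<in> sets (P y)" unfolding mc_P_sets[OF mc] by simp
    qed
    then show ?case by (simp add: indicator_def)
  qed
  finally show ?thesis .
qed

lemma disj_pow2: "i < j \<Longrightarrow> y \<in> {(2::real)^i<..2^Suc i} \<Longrightarrow> y \<notin> {2^j<..2^Suc j}"
proof -
  assume ij: "i < j" and y: "y \<in> {(2::real)^i<..2^Suc i}"
  have "(2::real)^Suc i \<le> 2^j" using ij by (intro power_increasing) auto
  then show ?thesis using y by auto
qed



lemma KI_lower:
  assumes mc: "markov_chain_on X K P" and x: "x \<in> X" and c: "0 < c" and al: "1 \<le> \<alpha>" and Y1: "1 \<le> Y1"
    and low: "\<And>t. Y1 \<le> t \<Longrightarrow> (3 * c / 4) * t powr (-\<alpha>) \<le> measure (P x) {w\<in>space (P x). t < pos_part (theta w)}"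
    and up: "\<And>t. Y1 \<le> t \<Longrightarrow> measure (P x) {w\<in>space (P x). t < pos_part (theta w)} \<le> (5 * c / 4) * t powr (-\<alpha>)"
    and T1: "4 * x \<le> T" and T2: "x + Y1 \<le> T"
  shows "(c / 28) * T powr (-\<alpha>) \<le> measure (K x) {T<..2*T}"
proof -
  interpret Px: prob_space "P x" by (rule mc_P_prob[OF mc])
  have sP: "sets (P x) = sets S" by (rule mc_P_sets[OF mc])
  have snth1[measurable]: "(\<lambda>w. w !! 1) \<in> P x \<rightarrow>\<^sub>M borel"
    by (subst measurable_cong_sets[OF sP refl]) measurable
  have thmeas[measurable]: "theta \<in> borel_measurable (P x)"
    by (subst measurable_cong_sets[OF sP refl]) measurable
  have x0: "0 \<le> x" using x mc_D(1)[OF mc] by auto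
  have T: "0 < T" using T2 Y1 x0 by linarith
  define t1 where "t1 = T - x"
  define t2 where "t2 = 2 * T - x"
  have t1: "Y1 \<le> t1" "t1 \<le> T" "0 < t1" using T2 x0 Y1 by (auto simp: t1_def)
  have t2: "Y1 \<le> t2" "t1 \<le> t2" "7 / 4 * T \<le> t2" using T2 T1 x0 Y1 T by (auto simp: t1_def t2_def)
  define A where "A t = {w\<in>space (P x). t < pos_part (theta w)}" for t
  have A[measurable]: "A t \<in> sets (P x)" for t unfolding A_def pos_part_def by measurable
  have sub: "A t2 \<subseteq> A t1" unfolding A_def using t2 by auto
  have "measure (K x) {T<..2*T} = measure (P x) {w\<in>space (P x). w !! 1 \<in> {T<..2*T}}"
  proof -
    have "measure (K x) {T<..2*T} = measure (distr (P x) borel (\<lambda>w. w !! 1)) {T<..2*T}"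
      using mc_distr1[OF mc x] by simp
    also have "\<dots> = measure (P x) ((\<lambda>w. w !! 1) -` {T<..2*T} \<inter> space (P x))"
      by (rule measure_distr[OF snth1]) simp
    finally show ?thesis by (simp add: vimage_def Int_def conj_commute)
  qed
  also have "\<dots> \<ge> measure (P x) (A t1 - A t2)"
  proof (rule Px.finite_measure_mono_AE)
    show "AE w in P x. w \<in> A t1 - A t2 \<longrightarrow> w \<in> {w\<in>space (P x). w !! 1 \<in> {T<..2*T}}"
      using mc_AE0[OF mc x]
    proof eventually_elim
      case (elim w)
      show ?case
      proof
        assume w: "w \<in> A t1 - A t2"
        then have "t1 < pos_part (theta w)" "\<not> t2 < pos_part (theta w)" unfolding A_def by auto
        then have "t1 < theta w" "theta w \<le> t2" using t1 unfolding pos_part_def by (auto split: if_splits)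
        then show "w \<in> {w\<in>space (P x). w !! 1 \<in> {T<..2*T}}"
          using w elim unfolding A_def theta_def t1_def t2_def by auto
      qed
    qed
    show "{w\<in>space (P x). w !! 1 \<in> {T<..2*T}} \<in> sets (P x)" by measurable
  qed
  finally have m: "measure (P x) (A t1) - measure (P x) (A t2) \<le> measure (K x) {T<..2*T}"
    using Px.finite_measure_Diff[OF A A sub] by simp
  have l1: "(3 * c / 4) * T powr (-\<alpha>) \<le> measure (P x) (A t1)"
  proof -
    have "T powr (-\<alpha>) \<le> t1 powr (-\<alpha>)" using t1 al by (intro powr_mono2') auto
    then have "(3 * c / 4) * T powr (-\<alpha>) \<le> (3 * c / 4) * t1 powr (-\<alpha>)" using c by simp
    also have "\<dots> \<le> measure (P x) (A t1)" unfolding A_def by (rule low[OF t1(1)])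
    finally show ?thesis .
  qed
  have l2: "measure (P x) (A t2) \<le> (5 * c / 7) * T powr (-\<alpha>)"
  proof -
    have "measure (P x) (A t2) \<le> (5 * c / 4) * t2 powr (-\<alpha>)" unfolding A_def by (rule up[OF t2(1)])
    also have "t2 powr (-\<alpha>) \<le> (7 / 4 * T) powr (-\<alpha>)" using t2 T al by (intro powr_mono2') auto
    also have "(7 / 4 * T) powr (-\<alpha>) = (7 / 4) powr (-\<alpha>) * T powr (-\<alpha>)" by (rule powr_mult)
    also have "(7 / 4 :: real) powr (-\<alpha>) \<le> (7 / 4) powr (-1)" using al by (intro powr_mono) auto
    also have "(7 / 4 :: real) powr (-1) = 4 / 7" by (simp add: powr_minus_divide)
    finally show ?thesis using c T by (simp add: mult_left_mono)
  qed
  show ?thesis using m l1 l2 by (simp add: algebra_simps)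
qed



lemma sum_disj_le:
  fixes f :: "nat \<Rightarrow> ennreal"
  assumes SS: "finite SS"
    and disj: "\<And>i j. i \<in> SS \<Longrightarrow> j \<in> SS \<Longrightarrow> w \<in> F i \<Longrightarrow> w \<in> F j \<Longrightarrow> i = j"
    and le: "\<And>j. j \<in> SS \<Longrightarrow> w \<in> F j \<Longrightarrow> f j \<le> h"
  shows "(\<Sum>j\<in>SS. f j * indicator (F j) w) \<le> h"
proof (cases "\<exists>i\<in>SS. w \<in> F i")
  case True
  then obtain i where i: "i \<in> SS" "w \<in> F i" by blast
  have "(\<Sum>j\<in>SS. f j * indicator (F j) w) = f i * indicator (F i) w + (\<Sum>j\<in>SS - {i}. f j * indicator (F j) w)"
    by (rule sum.remove[OF SS i(1)])
  also have "(\<Sum>j\<in>SS - {i}. f j * indicator (F j) w) = 0"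
    using disj i by (intro sum.neutral) (auto simp: indicator_def)
  finally show ?thesis using i le by simp
next
  case False
  then have "(\<Sum>j\<in>SS. f j * indicator (F j) w) = 0" by (intro sum.neutral) (auto simp: indicator_def)
  then show ?thesis by simp
qed

lemma term_lower:
  assumes mc: "markov_chain_on X K P" and x: "x \<in> X" and ax: "a < x"
    and q: "0 < q" and e: "1 \<le> e" and eq: "\<alpha> \<le> e * q" and c: "0 < c" and al: "1 \<le> \<alpha>" and Y1: "1 \<le> Y1" and Kc: "0 \<le> Kc"
    and low: "\<And>t. Y1 \<le> t \<Longrightarrow> (3 * c / 4) * t powr (-\<alpha>) \<le> measure (P x) {w\<in>space (P x). t < pos_part (theta w)}"
    and up: "\<And>t. Y1 \<le> t \<Longrightarrow> measure (P x) {w\<in>space (P x). t < pos_part (theta w)} \<le> (5 * c / 4) * t powr (-\<alpha>)"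
    and surv: "\<And>y n. y \<in> X \<Longrightarrow> 3 * (a + 1) \<le> y + 1 \<Longrightarrow> real n * Kc \<le> (y + 1) powr e / 12 \<Longrightarrow> 1 / 12 \<le> measure (P y) (Ev a n)"
    and T1: "4 * x \<le> T" and T2: "x + Y1 \<le> T" and T3: "3 * (a + 1) \<le> T" and T4: "24 * (Kc + 1) \<le> T"
  defines "n \<equiv> nat \<lfloor>T powr e / (12 * (Kc + 1))\<rfloor>"
  shows "ennreal ((c / 28) / 12 / (24 * (Kc + 1)) powr q) \<le> ennreal (real n powr q) * emeasure (P x) (Fv a n {T<..2*T})"
proof -
  have x0: "0 \<le> x" using x mc_D(1)[OF mc] by auto
  have "24 \<le> 24 * (Kc + 1)" using Kc by simp
  then have T: "1 \<le> T" using T4 by linarith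
  define L where "L = 24 * (Kc + 1)"
  have L: "0 < L" unfolding L_def using Kc by simp
  have Te: "T \<le> T powr e" using powr_mono[of 1 e T] T e by simp
  have ns: "real n * (Kc + 1) \<le> T powr e / 12"
  proof -
    have "real n \<le> T powr e / (12 * (Kc + 1))" unfolding n_def
      using Kc T by (simp add: of_nat_nat)
    then show ?thesis using Kc by (simp add: field_simps)
  qed
  have nl: "T powr e / L \<le> real n"
  proof -
    define v where "v = T powr e / (12 * (Kc + 1))"
    have v0: "0 \<le> v" unfolding v_def using Kc by simp
    have "real n = real_of_int \<lfloor>v\<rfloor>" unfolding n_def v_def[symmetric] using v0 by simp
    moreover have "v < real_of_int \<lfloor>v\<rfloor> + 1" using floor_correct[of v] by simp
    ultimately have "T powr e / (12 * (Kc + 1)) - 1 \<le> real n" unfolding v_def by linarith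
    moreover have "T powr e / L \<le> T powr e / (12 * (Kc + 1)) - 1"
    proof -
      have "L \<le> T powr e" unfolding L_def using T4 Te by linarith
      then have "1 \<le> T powr e / L" using L by simp
      moreover have "T powr e / (12 * (Kc + 1)) = 2 * (T powr e / L)" unfolding L_def using Kc by (simp add: field_simps)
      ultimately show ?thesis by linarith
    qed
    ultimately show ?thesis by linarith
  qed
  have KI: "(c / 28) * T powr (-\<alpha>) \<le> measure (K x) {T<..2*T}"
    by (rule KI_lower[OF mc x c al Y1 low up T1 T2])
  have Fv_ge: "ennreal (1 / 12 * measure (K x) {T<..2*T}) \<le> emeasure (P x) (Fv a n {T<..2*T})"
  proof -
    interpret Kx: prob_space "K x" by (rule mc_K_prob[OF mc])
    have "ennreal (1 / 12 * measure (K x) {T<..2*T}) = (\<integral>\<^sup>+y. ennreal (1/12) * indicator {T<..2*T} y \<partial>K x)"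
      using mc_K_sets[OF mc] by (simp add: nn_integral_cmult_indicator Kx.emeasure_eq_measure ennreal_mult[symmetric])
    also have "\<dots> \<le> (\<integral>\<^sup>+y. indicator {T<..2*T} y * emeasure (P y) (Ev a n) \<partial>K x)"
    proof (rule nn_integral_mono_AE, use mc_AEX[OF mc x] in eventually_elim)
      case (elim y)
      show ?case
      proof (cases "y \<in> {T<..2*T}")
        case True
        have y1: "3 * (a + 1) \<le> y + 1" using True T3 by auto
        have "T powr e \<le> (y + 1) powr e" using True T e by (intro powr_mono2) auto
        then have "real n * Kc \<le> (y + 1) powr e / 12"
          using ns Kc by (smt (verit) mult_left_mono of_nat_0_le_iff divide_right_mono)
        then have "1 / 12 \<le> measure (P y) (Ev a n)" by (rule surv[OF elim y1])
        then show ?thesis using True by (simp add: mc_emP[OF mc] ennreal_leI)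
      qed simp
    qed
    also have "\<dots> = emeasure (P x) (Fv a n {T<..2*T})" by (rule mc_Fv[OF mc x ax, symmetric]) simp
    finally show ?thesis .
  qed
  have "(c / 28) / 12 / L powr q \<le> real n powr q * (1 / 12 * measure (K x) {T<..2*T})"
  proof -
    have "(T powr e / L) powr q \<le> real n powr q" using nl L by (intro powr_mono2) (auto simp: less_imp_le q)
    moreover have "(T powr e / L) powr q = T powr (e * q) / L powr q"
      using T L by (simp add: powr_divide powr_powr)
    moreover have "T powr \<alpha> \<le> T powr (e * q)" using T eq by (intro powr_mono) auto
    ultimately have A: "T powr \<alpha> / L powr q \<le> real n powr q"
      using L by (smt (verit) divide_right_mono powr_gt_zero)
    have B: "(c / 28) / 12 * T powr (-\<alpha>) \<le> 1 / 12 * measure (K x) {T<..2*T}" using KI by simp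
    have "(c / 28) / 12 / L powr q = (T powr \<alpha> / L powr q) * ((c / 28) / 12 * T powr (-\<alpha>))"
      using T by (simp add: powr_minus field_simps)
    also have "\<dots> \<le> real n powr q * (1 / 12 * measure (K x) {T<..2*T})"
      by (rule mult_mono[OF A B]) (use c in auto)
    finally show ?thesis .
  qed
  then have "ennreal ((c / 28) / 12 / L powr q) \<le> ennreal (real n powr q) * ennreal (1 / 12 * measure (K x) {T<..2*T})"
    by (simp add: ennreal_mult[symmetric] ennreal_leI)
  also have "\<dots> \<le> ennreal (real n powr q) * emeasure (P x) (Fv a n {T<..2*T})"
    by (rule mult_left_mono[OF Fv_ge]) simp
  finally show ?thesis unfolding L_def .
qed



lemma final_infinite:
  assumes mc: "markov_chain_on X K P" and x: "x \<in> X" and ax: "a < x"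
    and q: "0 < q" and e: "1 \<le> e" and eq: "\<alpha> \<le> e * q" and c: "0 < c" and al: "1 \<le> \<alpha>" and Y1: "1 \<le> Y1" and Kc: "0 \<le> Kc"
    and low: "\<And>t. Y1 \<le> t \<Longrightarrow> (3 * c / 4) * t powr (-\<alpha>) \<le> measure (P x) {w\<in>space (P x). t < pos_part (theta w)}"
    and up: "\<And>t. Y1 \<le> t \<Longrightarrow> measure (P x) {w\<in>space (P x). t < pos_part (theta w)} \<le> (5 * c / 4) * t powr (-\<alpha>)"
    and surv: "\<And>y n. y \<in> X \<Longrightarrow> 3 * (a + 1) \<le> y + 1 \<Longrightarrow> real n * Kc \<le> (y + 1) powr e / 12 \<Longrightarrow> 1 / 12 \<le> measure (P y) (Ev a n)"
  shows "(\<integral>\<^sup>+w. hit_time_pow q a w \<partial>P x) = \<infinity>"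
proof (rule ccontr)
  assume fin: "(\<integral>\<^sup>+w. hit_time_pow q a w \<partial>P x) \<noteq> \<infinity>"
  then obtain r where r: "0 \<le> r" "(\<integral>\<^sup>+w. hit_time_pow q a w \<partial>P x) = ennreal r"
    by (cases "(\<integral>\<^sup>+w. hit_time_pow q a w \<partial>P x)") auto
  define \<delta> where "\<delta> = (c / 28) / 12 / (24 * (Kc + 1)) powr q"
  have \<delta>: "0 < \<delta>" unfolding \<delta>_def using c Kc by simp
  define T0 where "T0 = max (max (4 * x) (x + Y1)) (max (3 * (a + 1)) (24 * (Kc + 1)))"
  obtain J where J: "T0 < 2^J" using real_arch_pow[of 2 T0] by auto
  define nj where "nj j = nat \<lfloor>(2^j) powr e / (12 * (Kc + 1))\<rfloor>" for j :: nat
  define I where "I j = {(2::real)^j<..2*2^j}" for j :: nat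
  define F where "F j = Fv a (nj j) (I j)" for j
  have tl: "ennreal \<delta> \<le> ennreal (real (nj j) powr q) * emeasure (P x) (F j)" if j: "J \<le> j" for j
  proof -
    have "(2::real)^J \<le> 2^j" using j by (intro power_increasing) auto
    then have T: "T0 \<le> 2^j" using J by linarith
    show ?thesis unfolding \<delta>_def F_def nj_def I_def
      by (rule term_lower[OF mc x ax q e eq c al Y1 Kc low up surv]) (use T in \<open>auto simp: T0_def\<close>)
  qed
  have Fs: "F j \<in> sets (P x)" for j unfolding F_def I_def mc_P_sets[OF mc] by (rule Fv_sets) simp
  have pw: "(\<Sum>j\<in>{J..J+M}. ennreal (real (nj j) powr q) * indicator (F j) w) \<le> hit_time_pow q a w" for M w
  proof (rule sum_disj_le)
    show "finite {J..J+M}" by simp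
  next
    fix i j assume "w \<in> F i" "w \<in> F j"
    then have wi: "w !! 1 \<in> {(2::real)^i<..2^Suc i}" and wj: "w !! 1 \<in> {(2::real)^j<..2^Suc j}"
      unfolding F_def Fv_def I_def by auto
    show "i = j"
    proof (rule ccontr)
      assume "i \<noteq> j"
      then have "i < j \<or> j < i" by auto
      then show False using disj_pow2[OF _ wi] disj_pow2[OF _ wj] wi wj by auto
    qed
  next
    fix j assume "w \<in> F j"
    then have "\<forall>k\<le>Suc (nj j). a < w !! k" unfolding F_def Fv_def by auto
    then show "ennreal (real (nj j) powr q) \<le> hit_time_pow q a w" by (rule hit_lower) (use q in auto)
  qed
  have bound: "ennreal (real (Suc M) * \<delta>) \<le> ennreal r" for M
  proof -
    have "ennreal (real (Suc M) * \<delta>) = (\<Sum>j\<in>{J..J+M}. ennreal \<delta>)"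
    proof -
      have "(\<Sum>j\<in>{J..J+M}. ennreal \<delta>) = of_nat (Suc M) * ennreal \<delta>" by simp
      also have "\<dots> = ennreal (real (Suc M) * \<delta>)"
        using \<delta> by (simp only: ennreal_of_nat_eq_real_of_nat ennreal_mult'[symmetric] of_nat_0_le_iff)
      finally show ?thesis by simp
    qed
    also have "\<dots> \<le> (\<Sum>j\<in>{J..J+M}. ennreal (real (nj j) powr q) * emeasure (P x) (F j))"
      by (rule sum_mono, rule tl) simp
    also have "\<dots> = (\<integral>\<^sup>+w. (\<Sum>j\<in>{J..J+M}. ennreal (real (nj j) powr q) * indicator (F j) w) \<partial>P x)"
    proof -
      have m: "(\<lambda>w. ennreal (real (nj j) powr q) * indicator (F j) w) \<in> borel_measurable (P x)" for j
        using Fs[of j] by measurable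
      have "(\<integral>\<^sup>+w. (\<Sum>j\<in>{J..J+M}. ennreal (real (nj j) powr q) * indicator (F j) w) \<partial>P x)
          = (\<Sum>j\<in>{J..J+M}. (\<integral>\<^sup>+w. ennreal (real (nj j) powr q) * indicator (F j) w \<partial>P x))"
        by (rule nn_integral_sum) (rule m)
      also have "\<dots> = (\<Sum>j\<in>{J..J+M}. ennreal (real (nj j) powr q) * emeasure (P x) (F j))"
        by (rule sum.cong[OF refl]) (rule nn_integral_cmult_indicator[OF Fs])
      finally show ?thesis by simp
    qed
    also have "\<dots> \<le> (\<integral>\<^sup>+w. hit_time_pow q a w \<partial>P x)"
      by (rule nn_integral_mono) (rule pw)
    finally show ?thesis using r by simp
  qed
  obtain M where M: "r / \<delta> < real M" using reals_Archimedean2 by blast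
  have "real (Suc M) * \<delta> \<le> r" using bound[of M] r by (simp add: ennreal_le_iff)
  moreover have "r < real M * \<delta>" using M \<delta> by (simp add: field_simps)
  ultimately show False using \<delta> by (simp add: algebra_simps)
qed



theorem lemma5p1:
  fixes X :: "real set" and K :: "real \<Rightarrow> real measure" and P :: "real \<Rightarrow> real stream measure"
    and \<alpha> \<beta> c \<gamma> :: real
  assumes "markov_chain_on X K P"
    and "cond_T X P \<alpha> \<beta> c"
    and "0 \<le> \<gamma>" and "\<gamma> < \<alpha> - 1"
    and "Liminf (at_top \<sqinter> principal X) (\<lambda>x. ereal (x powr \<gamma> * mu P x)) > -\<infinity>"
  shows "\<forall>q \<ge> \<alpha> / (1 + \<gamma>). \<exists>a0. \<forall>a \<ge> a0. \<forall>x\<in>X. x > a \<longrightarrow>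
           (\<integral>\<^sup>+w. hit_time_pow q a w \<partial>P x) = \<infinity>"
proof (intro allI impI)
  fix q assume q: "\<alpha> / (1 + \<gamma>) \<le> q"
  note mc = assms(1)
  have par: "1 < \<alpha>" "\<alpha> < 2" "\<alpha> < \<beta>" "0 < c" using assms(2) unfolding cond_T_def by auto
  have g: "0 \<le> \<gamma>" "\<gamma> \<le> 1" using assms(3,4) par by auto
  obtain x0 Y1 B where x0: "0 \<le> x0" and Y1: "1 \<le> Y1" and B: "0 \<le> B"
    and up: "\<And>t x. Y1 \<le> t \<Longrightarrow> x \<in> X \<Longrightarrow> x0 \<le> x \<Longrightarrow>
       measure (P x) {w\<in>space (P x). t < pos_part (theta w)} \<le> (5 * c / 4) * t powr (-\<alpha>)"
    and low: "\<And>t x. Y1 \<le> t \<Longrightarrow> x \<in> X \<Longrightarrow> x0 \<le> x \<Longrightarrow>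
       (3 * c / 4) * t powr (-\<alpha>) \<le> measure (P x) {w\<in>space (P x). t < pos_part (theta w)}"
    and nb: "\<And>x. x \<in> X \<Longrightarrow> x0 \<le> x \<Longrightarrow> (\<integral>\<^sup>+w. ennreal (neg_part (theta w) powr \<beta>) \<partial>P x) \<le> ennreal B"
    by (rule setup_tail[OF assms(2)]) blast
  obtain C x1 where C: "0 \<le> C" and dr: "\<And>x. x \<in> X \<Longrightarrow> x1 \<le> x \<Longrightarrow> -C \<le> x powr \<gamma> * mu P x"
    by (rule drift_bound[OF assms(5)]) blast
  define p where "p = (1 + \<gamma> + \<alpha>) / 2"
  have p: "1 + \<gamma> \<le> p" "p \<le> 2" "p < \<alpha>" "p \<le> \<beta>" "1 \<le> p"
    unfolding p_def using assms(4) par g by auto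
  define Mp where "Mp = Y1 powr p + 5 * c / 4 * 2 powr p * Y1 powr (p - \<alpha>) / (1 - 2 powr (p - \<alpha>)) + 1 + B"
  have Mp: "0 \<le> Mp"
  proof -
    have r: "2 powr (p - \<alpha>) < (1::real)" using p powr_less_mono[of "p - \<alpha>" 0 "2::real"] by auto
    have "0 \<le> 5 * c / 4 * 2 powr p * Y1 powr (p - \<alpha>) / (1 - 2 powr (p - \<alpha>))" using r par by simp
    then show ?thesis unfolding Mp_def using B by simp
  qed
  have c54: "0 \<le> 5 * c / 4" using par by simp
  have momx: "integrable (P x) theta \<and> integrable (P x) (\<lambda>w. \<bar>theta w\<bar> powr p) \<and> (\<integral>w. \<bar>theta w\<bar> powr p \<partial>P x) \<le> Mp"
    if x: "x \<in> X" "x0 \<le> x" for x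
  proof -
    have u: "\<And>t. Y1 \<le> t \<Longrightarrow> measure (P x) {w\<in>space (P x). t < pos_part (theta w)} \<le> (5 * c / 4) * t powr (-\<alpha>)"
      using up x by blast
    show ?thesis using setup_moment[OF mc x(1) Y1 B p(5) p(3) p(4) c54 u nb[OF x]] unfolding Mp_def by blast
  qed
  define Kc where "Kc = 4 * C + 4 * Mp"
  have Kc: "0 \<le> Kc" unfolding Kc_def using C Mp by simp
  have q0: "0 < q" using q par g by (smt (verit) divide_pos_pos)
  have eq: "\<alpha> \<le> (1 + \<gamma>) * q" using q g by (simp add: divide_le_eq mult.commute)
  show "\<exists>a0. \<forall>a\<ge>a0. \<forall>x\<in>X. a < x \<longrightarrow> (\<integral>\<^sup>+w. hit_time_pow q a w \<partial>P x) = \<infinity>"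
  proof (intro exI[of _ "max (max x0 x1) 1"] allI impI ballI)
    fix a x assume a: "max (max x0 x1) 1 \<le> a" and x: "x \<in> X" and ax: "a < x"
    have a1: "1 \<le> a" using a by simp
    have hstep: "hh (1 + \<gamma>) ((x' + 1) / z) - Kc / z powr (1 + \<gamma>) \<le> (\<integral>y. hh (1 + \<gamma>) ((y + 1) / z) \<partial>K x')"
      if x': "x' \<in> X" "a < x'" and z: "1 \<le> z" for x' z
    proof -
      have xx: "x0 \<le> x'" "x1 \<le> x'" "1 \<le> x'" using a x' by auto
      note mm = momx[OF x'(1) xx(1)]
      show ?thesis unfolding Kc_def
        by (rule drift_step[OF mc x'(1) xx(3) g p(1) p(2) z conjunct1[OF mm] conjunct1[OF conjunct2[OF mm]]
              conjunct2[OF conjunct2[OF mm]] C dr[OF x'(1) xx(2)]])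
    qed
    have surv: "1 / 12 \<le> measure (P y) (Ev a n)"
      if "y \<in> X" "3 * (a + 1) \<le> y + 1" "real n * Kc \<le> (y + 1) powr (1 + \<gamma>) / 12" for y n
      by (rule survive[OF mc g a1 Kc hstep that])
    have xx0: "x0 \<le> x" using a ax by auto
    show "(\<integral>\<^sup>+w. hit_time_pow q a w \<partial>P x) = \<infinity>"
      by (rule final_infinite[OF mc x ax q0 _ eq par(4) _ Y1 Kc low[OF _ x xx0] up[OF _ x xx0] surv])
        (use g par in auto)
  qed
qed

end
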